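(* Let $(\mathfrak{A},\mathfrak{A}_0)$ be a $*$-semisimple Banach quasi $*$-algebra such that $\mathfrak{A}[\tau_w]$ is sequentially complete. Let $\delta$ be a closable qu*-derivation of $(\mathfrak{A},\mathfrak{A}_0)$ with closure $\overline{\delta}$. If $a,b\in\mathcal{D}(\overline{\delta})$ and $a\,\square\, b$ is well defined, then there exists an element $\overline{\delta}_w(a\,\square\, b)\in\mathfrak{A}$ such that $$\varphi(\overline{\delta}_w(a\,\square\, b)u,v)=\varphi(bu,\overline{\delta}(a)^*v)+\varphi(\overline{\delta}(b)u,a^*v)$$ for all $u,v\in\mathfrak{A}_0$ and all $\varphi\in\mathcal{S}_{\mathfrak{A}_0}(\mathfrak{A})$.
   Context: A quasi $*$-algebra $(\mathfrak{A},\mathfrak{A}_0)$ consists of a vector space $\mathfrak{A}$ and a $*$-algebra $\mathfrak{A}_0\subseteq\mathfrak{A}$ such that $\mathfrak{A}$ carries an involution extending that of $\mathfrak{A}_0$, $\mathfrak{A}$ is an $\mathfrak{A}_0$-bimodule whose module multiplications extend the multiplication of $\mathfrak{A}_0$ with $(xa)y=x(ay)$, $a(xy)=(ax)y$ for $a\in\mathfrak{A}$, $x,y\in\mathfrak{A}_0$, and $(ax)^*=x^*a^*$. It is a Banach quasi $*$-algebra if $\mathfrak{A}$ is a Banach space with norm $\|\cdot\|$ such that $\|a^*\|=\|a\|$, $\mathfrak{A}_0$ is dense in $\mathfrak{A}$, and for each $x\in\mathfrak{A}_0$ the map $a\mapsto ax$ is continuous on $\mathfrak{A}$. Let $\mathcal{S}_{\mathfrak{A}_0}(\mathfrak{A})$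 be the set of sesquilinear forms $\varphi$ on $\mathfrak{A}\times\mathfrak{A}$ with $\varphi(a,a)\ge 0$, $\varphi(ax,y)=\varphi(x,a^*y)$ for $a\in\mathfrak{A}$, $x,y\in\mathfrak{A}_0$, and $|\varphi(a,b)|\le\|a\|\|b\|$ for all $a,b\in\mathfrak{A}$. The Banach quasi $*$-algebra is $*$-semisimple if $\varphi(a,a)=0$ for all $\varphi\in\mathcal{S}_{\mathfrak{A}_0}(\mathfrak{A})$ implies $a=0$. The topology $\tau_w$ on $\mathfrak{A}$ is generated by the seminorms $a\mapsto|\varphi(ax,y)|$, $\varphi\in\mathcal{S}_{\mathfrak{A}_0}(\mathfrak{A})$, $x,y\in\mathfrak{A}_0$. For $a,b\in\mathfrak{A}$ the weak product $a\,\square\, b$ is well defined if there is a (necessarily unique) $c\in\mathfrak{A}$ with $\varphi(bx,a^*y)=\varphi(cx,y)$ for all $x,y\in\mathfrak{A}_0$, $\varphi\in\mathcal{S}_{\mathfrak{A}_0}(\mathfrak{A})$; then $a\,\square\, b:=c$. A qu*-derivation is a linear map $\delta:\mathfrak{A}_0\to\mathfrak{A}$ with $\delta(x^* )=\delta(x)^*$ and $\delta(xy)=\delta(x)y+x\delta(y)$ for $x,y\in\mathfrak{A}_0$. It is closable if it is closable as a linear map from $\mathfrak{A}_0\subseteq\mathfrak{A}$ (norm of $\mathfrak{A}$) into $\mathfrak{A}$; its closure $\overline{\delta}$ has domain $\mathcal{D}(\overline{\delta})$ consisting of those $a\in\mathfrak{A}$ for which there exist $\{x_n\}\subset\mathfrak{A}_0$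 and $w\in\mathfrak{A}$ with $\|x_n-a\|\to0$ and $\|\delta(x_n)-w\|\to 0$, and $\overline{\delta}(a):=w$. *)

theory Defs
  imports "HOL-Analysis.Analysis"
begin

text \<open>The underlying space is a real Banach space 'a together with a complex
scalar multiplication smul extending the real one, i.e. a complex Banach space.\<close>

definition complex_scalar :: "(complex \<Rightarrow> 'a::banach \<Rightarrow> 'a) \<Rightarrow> bool" where
  "complex_scalar smul \<longleftrightarrow>
     (\<forall>r a. smul (complex_of_real r) a = r *\<^sub>R a) \<and>
     (\<forall>c d a. smul c (smul d a) = smul (c * d) a) \<and>
     (\<forall>c a b. smul c (a + b) = smul c a + smul c b) \<and>
     (\<forall>c d a. smul (c + d) a = smul c a + smul d a) \<and>
     (\<forall>c a. norm (smul c a) = cmod c * norm a)"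

text \<open>Quasi *-algebra (A, A0): A is the whole type, A0 a subset; mul a x and
mul x a are the module multiplications (only relevant when one factor lies in A0);
invl is the involution.\<close>

definition quasi_star_algebra ::
  "'a::banach set \<Rightarrow> (complex \<Rightarrow> 'a \<Rightarrow> 'a) \<Rightarrow> ('a \<Rightarrow> 'a \<Rightarrow> 'a) \<Rightarrow> ('a \<Rightarrow> 'a) \<Rightarrow> bool" where
  "quasi_star_algebra A0 smul mul invl \<longleftrightarrow>
     complex_scalar smul \<and>
     0 \<in> A0 \<and> (\<forall>x\<in>A0. \<forall>y\<in>A0. x + y \<in> A0) \<and> (\<forall>c. \<forall>x\<in>A0. smul c x \<in> A0) \<and>
     (\<forall>x\<in>A0. \<forall>y\<in>A0. mul x y \<in> A0) \<and> (\<forall>x\<in>A0. invl x \<in> A0) \<and>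
     (\<forall>a. invl (invl a) = a) \<and> (\<forall>a b. invl (a + b) = invl a + invl b) \<and>
     (\<forall>c a. invl (smul c a) = smul (cnj c) (invl a)) \<and>
     (\<forall>x\<in>A0. \<forall>a b. mul (a + b) x = mul a x + mul b x \<and> mul x (a + b) = mul x a + mul x b) \<and>
     (\<forall>x\<in>A0. \<forall>c a. mul (smul c a) x = smul c (mul a x) \<and> mul x (smul c a) = smul c (mul x a)) \<and>
     (\<forall>x\<in>A0. \<forall>y\<in>A0. \<forall>a. mul a (x + y) = mul a x + mul a y \<and> mul (x + y) a = mul x a + mul y a) \<and>
     (\<forall>x\<in>A0. \<forall>c a. mul a (smul c x) = smul c (mul a x) \<and> mul (smul c x) a = smul c (mul x a)) \<and>
     (\<forall>x\<in>A0. \<forall>y\<in>A0. \<forall>a.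
        mul (mul x a) y = mul x (mul a y) \<and>
        mul a (mul x y) = mul (mul a x) y \<and>
        mul (mul x y) a = mul x (mul y a)) \<and>
     (\<forall>x\<in>A0. \<forall>a. invl (mul a x) = mul (invl x) (invl a))"

definition banach_quasi_star_algebra ::
  "'a::banach set \<Rightarrow> (complex \<Rightarrow> 'a \<Rightarrow> 'a) \<Rightarrow> ('a \<Rightarrow> 'a \<Rightarrow> 'a) \<Rightarrow> ('a \<Rightarrow> 'a) \<Rightarrow> bool" where
  "banach_quasi_star_algebra A0 smul mul invl \<longleftrightarrow>
     quasi_star_algebra A0 smul mul invl \<and>
     (\<forall>a. norm (invl a) = norm a) \<and>
     closure A0 = UNIV \<and>
     (\<forall>x\<in>A0. continuous_on UNIV (\<lambda>a. mul a x))"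

definition sesquilinear :: "(complex \<Rightarrow> 'a::banach \<Rightarrow> 'a) \<Rightarrow> ('a \<Rightarrow> 'a \<Rightarrow> complex) \<Rightarrow> bool" where
  "sesquilinear smul \<phi> \<longleftrightarrow>
     (\<forall>a b d. \<phi> (a + b) d = \<phi> a d + \<phi> b d) \<and>
     (\<forall>c a b. \<phi> (smul c a) b = c * \<phi> a b) \<and>
     (\<forall>a b d. \<phi> a (b + d) = \<phi> a b + \<phi> a d) \<and>
     (\<forall>c a b. \<phi> a (smul c b) = cnj c * \<phi> a b)"

definition S_forms ::
  "'a::banach set \<Rightarrow> (complex \<Rightarrow> 'a \<Rightarrow> 'a) \<Rightarrow> ('a \<Rightarrow> 'a \<Rightarrow> 'a) \<Rightarrow> ('a \<Rightarrow> 'a) \<Rightarrow> ('a \<Rightarrow> 'a \<Rightarrow> complex) set" where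
  "S_forms A0 smul mul invl = {\<phi>. sesquilinear smul \<phi> \<and>
     (\<forall>a. \<phi> a a \<in> \<real> \<and> 0 \<le> Re (\<phi> a a)) \<and>
     (\<forall>a. \<forall>x\<in>A0. \<forall>y\<in>A0. \<phi> (mul a x) y = \<phi> x (mul (invl a) y)) \<and>
     (\<forall>a b. cmod (\<phi> a b) \<le> norm a * norm b)}"

definition star_semisimple ::
  "'a::banach set \<Rightarrow> (complex \<Rightarrow> 'a \<Rightarrow> 'a) \<Rightarrow> ('a \<Rightarrow> 'a \<Rightarrow> 'a) \<Rightarrow> ('a \<Rightarrow> 'a) \<Rightarrow> bool" where
  "star_semisimple A0 smul mul invl \<longleftrightarrow>
     (\<forall>a. (\<forall>\<phi>\<in>S_forms A0 smul mul invl. \<phi> a a = 0) \<longrightarrow> a = 0)"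

text \<open>Sequential completeness of A with respect to the locally convex topology tau_w
generated by the seminorms a \<mapsto> |phi(a x, y)|.\<close>

definition tau_w_seq_complete ::
  "'a::banach set \<Rightarrow> (complex \<Rightarrow> 'a \<Rightarrow> 'a) \<Rightarrow> ('a \<Rightarrow> 'a \<Rightarrow> 'a) \<Rightarrow> ('a \<Rightarrow> 'a) \<Rightarrow> bool" where
  "tau_w_seq_complete A0 smul mul invl \<longleftrightarrow>
     (\<forall>s :: nat \<Rightarrow> 'a.
        (\<forall>\<phi>\<in>S_forms A0 smul mul invl. \<forall>x\<in>A0. \<forall>y\<in>A0. \<forall>e>0. \<exists>N. \<forall>m\<ge>N. \<forall>n\<ge>N.
            cmod (\<phi> (mul (s m - s n) x) y) < e)
        \<longrightarrow> (\<exists>a. \<forall>\<phi>\<in>S_forms A0 smul mul invl. \<forall>x\<in>A0. \<forall>y\<in>A0.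
               (\<lambda>n. cmod (\<phi> (mul (s n - a) x) y)) \<longlonglongrightarrow> 0))"

definition weak_prod_defined ::
  "'a::banach set \<Rightarrow> (complex \<Rightarrow> 'a \<Rightarrow> 'a) \<Rightarrow> ('a \<Rightarrow> 'a \<Rightarrow> 'a) \<Rightarrow> ('a \<Rightarrow> 'a) \<Rightarrow> 'a \<Rightarrow> 'a \<Rightarrow> bool" where
  "weak_prod_defined A0 smul mul invl a b \<longleftrightarrow>
     (\<exists>c. \<forall>\<phi>\<in>S_forms A0 smul mul invl. \<forall>x\<in>A0. \<forall>y\<in>A0.
          \<phi> (mul b x) (mul (invl a) y) = \<phi> (mul c x) y)"

definition qu_derivation ::
  "'a::banach set \<Rightarrow> (complex \<Rightarrow> 'a \<Rightarrow> 'a) \<Rightarrow> ('a \<Rightarrow> 'a \<Rightarrow> 'a) \<Rightarrow> ('a \<Rightarrow> 'a) \<Rightarrow> ('a \<Rightarrow> 'a) \<Rightarrow> bool" where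
  "qu_derivation A0 smul mul invl \<delta> \<longleftrightarrow>
     (\<forall>x\<in>A0. \<forall>y\<in>A0. \<delta> (x + y) = \<delta> x + \<delta> y) \<and>
     (\<forall>c. \<forall>x\<in>A0. \<delta> (smul c x) = smul c (\<delta> x)) \<and>
     (\<forall>x\<in>A0. \<delta> (invl x) = invl (\<delta> x)) \<and>
     (\<forall>x\<in>A0. \<forall>y\<in>A0. \<delta> (mul x y) = mul (\<delta> x) y + mul x (\<delta> y))"

definition in_closed_graph :: "'a::banach set \<Rightarrow> ('a \<Rightarrow> 'a) \<Rightarrow> 'a \<Rightarrow> 'a \<Rightarrow> bool" where
  "in_closed_graph A0 \<delta> a w \<longleftrightarrow>
     (\<exists>xs :: nat \<Rightarrow> 'a. (\<forall>n. xs n \<in> A0) \<and> xs \<longlonglongrightarrow> a \<and> (\<lambda>n. \<delta> (xs n)) \<longlonglongrightarrow> w)"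

definition closable :: "'a::banach set \<Rightarrow> ('a \<Rightarrow> 'a) \<Rightarrow> bool" where
  "closable A0 \<delta> \<longleftrightarrow> (\<forall>w. in_closed_graph A0 \<delta> 0 w \<longrightarrow> w = 0)"

definition closure_dom :: "'a::banach set \<Rightarrow> ('a \<Rightarrow> 'a) \<Rightarrow> 'a set" where
  "closure_dom A0 \<delta> = {a. \<exists>w. in_closed_graph A0 \<delta> a w}"

definition closure_op :: "'a::banach set \<Rightarrow> ('a \<Rightarrow> 'a) \<Rightarrow> 'a \<Rightarrow> 'a" where
  "closure_op A0 \<delta> a = (THE w. in_closed_graph A0 \<delta> a w)"

end

theory Submission
  imports Defs
begin

lemma qsa_D:
  assumes "quasi_star_algebra A0 smul mul invl"
  shows qsa_cs: "complex_scalar smul"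
    and qsa_0: "0 \<in> A0"
    and qsa_add0: "x \<in> A0 \<Longrightarrow> y \<in> A0 \<Longrightarrow> x + y \<in> A0"
    and qsa_smul0: "x \<in> A0 \<Longrightarrow> smul c x \<in> A0"
    and qsa_mul0: "x \<in> A0 \<Longrightarrow> y \<in> A0 \<Longrightarrow> mul x y \<in> A0"
    and qsa_invl0: "x \<in> A0 \<Longrightarrow> invl x \<in> A0"
    and qsa_invl2: "invl (invl a) = a"
    and qsa_invl_add: "invl (a + b) = invl a + invl b"
    and qsa_invl_smul: "invl (smul c a) = smul (cnj c) (invl a)"
    and qsa_rmul_add: "x \<in> A0 \<Longrightarrow> mul (a + b) x = mul a x + mul b x"
    and qsa_lmul_add: "x \<in> A0 \<Longrightarrow> mul x (a + b) = mul x a + mul x b"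
    and qsa_assoc1: "x \<in> A0 \<Longrightarrow> y \<in> A0 \<Longrightarrow> mul (mul x a) y = mul x (mul a y)"
    and qsa_assoc2: "x \<in> A0 \<Longrightarrow> y \<in> A0 \<Longrightarrow> mul a (mul x y) = mul (mul a x) y"
    and qsa_invl_mul: "x \<in> A0 \<Longrightarrow> invl (mul a x) = mul (invl x) (invl a)"
  using assms unfolding quasi_star_algebra_def by simp_all

lemma additive_diff:
  fixes f :: "'a::ab_group_add \<Rightarrow> 'b::ab_group_add"
  assumes "\<And>p q. f (p + q) = f p + f q"
  shows "f (p - q) = f p - f q"
proof -
  have "f (p - q) + f q = f p" using assms[of "p - q" q] by simp
  then show ?thesis by (simp add: eq_diff_eq)
qed

lemma invl_bl:
  assumes Q: "quasi_star_algebra A0 smul mul invl" and N: "\<forall>a. norm (invl a) = norm a"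
  shows "bounded_linear invl"
proof (rule bounded_linear_intro[where K=1])
  show "invl (x + y) = invl x + invl y" for x y by (rule qsa_invl_add[OF Q])
  show "invl (r *\<^sub>R x) = r *\<^sub>R invl x" for r x
  proof -
    have cs: "complex_scalar smul" by (rule qsa_cs[OF Q])
    have "r *\<^sub>R x = smul (complex_of_real r) x" using cs unfolding complex_scalar_def by simp
    moreover have "invl (smul (complex_of_real r) x) = smul (cnj (complex_of_real r)) (invl x)"
      by (rule qsa_invl_smul[OF Q])
    moreover have "smul (complex_of_real r) (invl x) = r *\<^sub>R invl x" using cs unfolding complex_scalar_def by simp
    ultimately show ?thesis by simp
  qed
  show "norm (invl x) \<le> norm x * 1" for x using N by simp
qed

lemma phi_bb:
  assumes Q: "quasi_star_algebra A0 smul mul invl" and P: "\<phi> \<in> S_forms A0 smul mul invl"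
  shows "bounded_bilinear \<phi>"
proof -
  have cs: "complex_scalar smul" by (rule qsa_cs[OF Q])
  have R: "r *\<^sub>R x = smul (complex_of_real r) x" for r x using cs unfolding complex_scalar_def by simp
  have sl: "sesquilinear smul \<phi>" using P unfolding S_forms_def by blast
  show ?thesis
  proof
    show "\<phi> (a + a') b = \<phi> a b + \<phi> a' b" for a a' b using sl unfolding sesquilinear_def by blast
    show "\<phi> a (b + b') = \<phi> a b + \<phi> a b'" for a b b' using sl unfolding sesquilinear_def by blast
    show "\<phi> (r *\<^sub>R a) b = r *\<^sub>R \<phi> a b" for r a b
      using sl unfolding sesquilinear_def R by (simp add: scaleR_conv_of_real)
    show "\<phi> a (r *\<^sub>R b) = r *\<^sub>R \<phi> a b" for r a b
      using sl unfolding sesquilinear_def R by (simp add: scaleR_conv_of_real)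
    show "\<exists>K. \<forall>a b. norm (\<phi> a b) \<le> norm a * norm b * K"
      using P unfolding S_forms_def by (intro exI[where x=1]) auto
  qed
qed

lemma rmul_tendsto:
  assumes B: "banach_quasi_star_algebra A0 smul mul invl" and x: "x \<in> A0"
    and t: "f \<longlonglongrightarrow> l"
  shows "(\<lambda>n. mul (f n) x) \<longlonglongrightarrow> mul l x"
proof -
  have "continuous_on UNIV (\<lambda>a. mul a x)" using B x unfolding banach_quasi_star_algebra_def by blast
  then have "isCont (\<lambda>a. mul a x) l" by (simp add: continuous_on_eq_continuous_at)
  then show ?thesis using t by (rule isCont_tendsto_compose)
qed

lemma L1:
  assumes B: "banach_quasi_star_algebra A0 smul mul invl"
    and P: "\<phi> \<in> S_forms A0 smul mul invl" and x: "x \<in> A0" and v: "v \<in> A0"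
  shows "\<phi> (mul x w) v = \<phi> w (mul (invl x) v)"
proof -
  have Q: "quasi_star_algebra A0 smul mul invl" using B unfolding banach_quasi_star_algebra_def by blast
  have il: "bounded_linear invl" using invl_bl Q B unfolding banach_quasi_star_algebra_def by blast
  have bb: "bounded_bilinear \<phi>" using phi_bb Q P by blast
  have "w \<in> closure A0" using B unfolding banach_quasi_star_algebra_def by simp
  then obtain ws where ws: "\<And>n. ws n \<in> A0" "ws \<longlonglongrightarrow> w" unfolding closure_sequential by blast
  have ix: "invl x \<in> A0" using qsa_invl0[OF Q] x by blast
  have id: "mul x c = invl (mul (invl c) (invl x))" for c
  proof -
    have "invl (mul (invl c) (invl x)) = mul (invl (invl x)) (invl (invl c))"
      using qsa_invl_mul[OF Q] ix by blast
    also have "\<dots> = mul x c" using qsa_invl2[OF Q] by simp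
    finally show ?thesis by simp
  qed
  have eq: "\<phi> (mul x (ws n)) v = \<phi> (ws n) (mul (invl x) v)" for n
    using P ws(1) v unfolding S_forms_def by blast
  have t1: "(\<lambda>n. invl (ws n)) \<longlonglongrightarrow> invl w" using il ws(2) by (rule bounded_linear.tendsto)
  have t2: "(\<lambda>n. mul (invl (ws n)) (invl x)) \<longlonglongrightarrow> mul (invl w) (invl x)"
    using rmul_tendsto[OF B ix t1] .
  have t3: "(\<lambda>n. mul x (ws n)) \<longlonglongrightarrow> mul x w"
    unfolding id using il t2 by (rule bounded_linear.tendsto)
  have l1: "(\<lambda>n. \<phi> (mul x (ws n)) v) \<longlonglongrightarrow> \<phi> (mul x w) v"
    using bb t3 tendsto_const by (rule bounded_bilinear.tendsto)
  have l2: "(\<lambda>n. \<phi> (ws n) (mul (invl x) v)) \<longlonglongrightarrow> \<phi> w (mul (invl x) v)"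
    using bb ws(2) tendsto_const by (rule bounded_bilinear.tendsto)
  show ?thesis using l1 l2 unfolding eq by (rule LIMSEQ_unique)
qed

lemma closure_op_eq:
  assumes Q: "quasi_star_algebra A0 smul mul invl"
    and D: "qu_derivation A0 smul mul invl \<delta>" and C: "closable A0 \<delta>"
    and g: "in_closed_graph A0 \<delta> a w"
  shows "closure_op A0 \<delta> a = w"
proof -
  have cs: "complex_scalar smul" by (rule qsa_cs[OF Q])
  have neg: "smul (-1) y = - y" for y
    using cs unfolding complex_scalar_def by (metis of_real_1 of_real_minus scaleR_minus1_left)
  have uniq: "w2 = w" if g2: "in_closed_graph A0 \<delta> a w2" for w2
  proof -
    obtain xs where xs: "\<And>n. xs n \<in> A0" "xs \<longlonglongrightarrow> a" "(\<lambda>n. \<delta> (xs n)) \<longlonglongrightarrow> w"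
      using g unfolding in_closed_graph_def by blast
    obtain ys where ys: "\<And>n. ys n \<in> A0" "ys \<longlonglongrightarrow> a" "(\<lambda>n. \<delta> (ys n)) \<longlonglongrightarrow> w2"
      using g2 unfolding in_closed_graph_def by blast
    have m: "smul (-1) (xs n) \<in> A0" for n using qsa_smul0[OF Q xs(1)] .
    have z: "ys n + smul (-1) (xs n) \<in> A0" for n using qsa_add0[OF Q ys(1) m] .
    have dz: "\<delta> (ys n + smul (-1) (xs n)) = \<delta> (ys n) - \<delta> (xs n)" for n
    proof -
      have "\<delta> (ys n + smul (-1) (xs n)) = \<delta> (ys n) + \<delta> (smul (-1) (xs n))"
        using D ys(1) m unfolding qu_derivation_def by blast
      also have "\<delta> (smul (-1) (xs n)) = smul (-1) (\<delta> (xs n))"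
        using D xs(1) unfolding qu_derivation_def by blast
      finally show ?thesis by (simp add: neg)
    qed
    have "in_closed_graph A0 \<delta> 0 (w2 - w)"
      unfolding in_closed_graph_def
    proof (intro exI conjI allI)
      show "ys n + smul (-1) (xs n) \<in> A0" for n by (rule z)
      show "(\<lambda>n. ys n + smul (-1) (xs n)) \<longlonglongrightarrow> 0"
        unfolding neg using tendsto_diff[OF ys(2) xs(2)] by simp
      show "(\<lambda>n. \<delta> (ys n + smul (-1) (xs n))) \<longlonglongrightarrow> w2 - w"
        unfolding dz using tendsto_diff[OF ys(3) xs(3)] .
    qed
    then have "w2 - w = 0" using C unfolding closable_def by blast
    then show ?thesis by simp
  qed
  show ?thesis unfolding closure_op_def using g uniq by (rule the_equality)
qed

theorem proposition3p2:
  fixes A0 :: "'a::banach set"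
    and smul :: "complex \<Rightarrow> 'a \<Rightarrow> 'a"
    and mul :: "'a \<Rightarrow> 'a \<Rightarrow> 'a"
    and invl :: "'a \<Rightarrow> 'a"
    and \<delta> :: "'a \<Rightarrow> 'a"
    and a b :: 'a
  assumes "banach_quasi_star_algebra A0 smul mul invl"
    and "star_semisimple A0 smul mul invl"
    and "tau_w_seq_complete A0 smul mul invl"
    and "qu_derivation A0 smul mul invl \<delta>"
    and "closable A0 \<delta>"
    and "a \<in> closure_dom A0 \<delta>" and "b \<in> closure_dom A0 \<delta>"
    and "weak_prod_defined A0 smul mul invl a b"
  shows "\<exists>d. \<forall>\<phi>\<in>S_forms A0 smul mul invl. \<forall>u\<in>A0. \<forall>v\<in>A0.
           \<phi> (mul d u) v =
             \<phi> (mul b u) (mul (invl (closure_op A0 \<delta> a)) v)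
             + \<phi> (mul (closure_op A0 \<delta> b) u) (mul (invl a) v)"
proof -
  note B = assms(1) and TW = assms(3) and D = assms(4) and C = assms(5)
  have Q: "quasi_star_algebra A0 smul mul invl" using B unfolding banach_quasi_star_algebra_def by blast
  have il: "bounded_linear invl" using invl_bl Q B unfolding banach_quasi_star_algebra_def by blast
  obtain wa where ga: "in_closed_graph A0 \<delta> a wa" using assms(6) unfolding closure_dom_def by blast
  obtain wb where gb: "in_closed_graph A0 \<delta> b wb" using assms(7) unfolding closure_dom_def by blast
  have ea: "closure_op A0 \<delta> a = wa" using closure_op_eq[OF Q D C ga] .
  have eb: "closure_op A0 \<delta> b = wb" using closure_op_eq[OF Q D C gb] .
  obtain xs where xs: "\<And>n. xs n \<in> A0" "xs \<longlonglongrightarrow> a" "(\<lambda>n. \<delta> (xs n)) \<longlonglongrightarrow> wa"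
    using ga unfolding in_closed_graph_def by blast
  obtain ys where ys: "\<And>n. ys n \<in> A0" "ys \<longlonglongrightarrow> b" "(\<lambda>n. \<delta> (ys n)) \<longlonglongrightarrow> wb"
    using gb unfolding in_closed_graph_def by blast
  define s where "s n = \<delta> (mul (xs n) (ys n))" for n
  define R where "R (\<phi>::'a \<Rightarrow> 'a \<Rightarrow> complex) u v = \<phi> (mul b u) (mul (invl wa) v) + \<phi> (mul wb u) (mul (invl a) v)" for \<phi> u v
  have conv: "(\<lambda>n. \<phi> (mul (s n) u) v) \<longlonglongrightarrow> R \<phi> u v"
    if P: "\<phi> \<in> S_forms A0 smul mul invl" and u: "u \<in> A0" and v: "v \<in> A0" for \<phi> u v
  proof -
    have bb: "bounded_bilinear \<phi>" using phi_bb Q P by blast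
    have eq: "\<phi> (mul (s n) u) v = \<phi> (mul (ys n) u) (mul (invl (\<delta> (xs n))) v)
        + \<phi> (mul (\<delta> (ys n)) u) (mul (invl (xs n)) v)" for n
    proof -
      have yu: "mul (ys n) u \<in> A0" using qsa_mul0[OF Q ys(1) u] .
      have "s n = mul (\<delta> (xs n)) (ys n) + mul (xs n) (\<delta> (ys n))"
        unfolding s_def using D xs(1) ys(1) unfolding qu_derivation_def by blast
      then have "mul (s n) u = mul (mul (\<delta> (xs n)) (ys n)) u + mul (mul (xs n) (\<delta> (ys n))) u"
        using qsa_rmul_add[OF Q u] by simp
      also have "\<dots> = mul (\<delta> (xs n)) (mul (ys n) u) + mul (xs n) (mul (\<delta> (ys n)) u)"
        using qsa_assoc2[OF Q ys(1) u] qsa_assoc1[OF Q xs(1) u] by simp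
      finally have "\<phi> (mul (s n) u) v = \<phi> (mul (\<delta> (xs n)) (mul (ys n) u)) v
          + \<phi> (mul (xs n) (mul (\<delta> (ys n)) u)) v"
        using bounded_bilinear.add_left[OF bb] by simp
      also have "\<phi> (mul (\<delta> (xs n)) (mul (ys n) u)) v = \<phi> (mul (ys n) u) (mul (invl (\<delta> (xs n))) v)"
        using P yu v unfolding S_forms_def by blast
      also have "\<phi> (mul (xs n) (mul (\<delta> (ys n)) u)) v = \<phi> (mul (\<delta> (ys n)) u) (mul (invl (xs n)) v)"
        using L1[OF B P xs(1) v] .
      finally show ?thesis .
    qed
    have t1: "(\<lambda>n. mul (ys n) u) \<longlonglongrightarrow> mul b u" using rmul_tendsto[OF B u ys(2)] .
    have t2: "(\<lambda>n. mul (invl (\<delta> (xs n))) v) \<longlonglongrightarrow> mul (invl wa) v"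
      using rmul_tendsto[OF B v bounded_linear.tendsto[OF il xs(3)]] .
    have t3: "(\<lambda>n. mul (\<delta> (ys n)) u) \<longlonglongrightarrow> mul wb u" using rmul_tendsto[OF B u ys(3)] .
    have t4: "(\<lambda>n. mul (invl (xs n)) v) \<longlonglongrightarrow> mul (invl a) v"
      using rmul_tendsto[OF B v bounded_linear.tendsto[OF il xs(2)]] .
    show ?thesis unfolding eq R_def
      by (intro tendsto_add bounded_bilinear.tendsto[OF bb] t1 t2 t3 t4)
  qed
  have rd: "mul (p - q) x = mul p x - mul q x" if "x \<in> A0" for p q x
    by (rule additive_diff) (rule qsa_rmul_add[OF Q that])
  have pd: "\<phi> (p - q) y = \<phi> p y - \<phi> q y" if "\<phi> \<in> S_forms A0 smul mul invl" for \<phi> p q y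
    using bounded_bilinear.diff_left[OF phi_bb[OF Q that]] .
  have cauchy: "\<forall>\<phi>\<in>S_forms A0 smul mul invl. \<forall>x\<in>A0. \<forall>y\<in>A0. \<forall>e>0. \<exists>N. \<forall>m\<ge>N. \<forall>n\<ge>N.
            cmod (\<phi> (mul (s m - s n) x) y) < e"
  proof (intro ballI allI impI)
    fix \<phi> x y and e :: real
    assume P: "\<phi> \<in> S_forms A0 smul mul invl" and x: "x \<in> A0" and y: "y \<in> A0" and e: "e > 0"
    have "Cauchy (\<lambda>n. \<phi> (mul (s n) x) y)" using LIMSEQ_imp_Cauchy[OF conv[OF P x y]] .
    then obtain N where N: "\<forall>m\<ge>N. \<forall>n\<ge>N. dist (\<phi> (mul (s m) x) y) (\<phi> (mul (s n) x) y) < e"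
      using e unfolding Cauchy_def by blast
    show "\<exists>N. \<forall>m\<ge>N. \<forall>n\<ge>N. cmod (\<phi> (mul (s m - s n) x) y) < e"
      using N by (auto simp: rd[OF x] pd[OF P] dist_norm)
  qed
  obtain d where d: "\<forall>\<phi>\<in>S_forms A0 smul mul invl. \<forall>x\<in>A0. \<forall>y\<in>A0.
               (\<lambda>n. cmod (\<phi> (mul (s n - d) x) y)) \<longlonglongrightarrow> 0"
    using TW cauchy unfolding tau_w_seq_complete_def by blast
  show ?thesis
  proof (intro exI ballI)
    fix \<phi> u v
    assume P: "\<phi> \<in> S_forms A0 smul mul invl" and u: "u \<in> A0" and v: "v \<in> A0"
    have "(\<lambda>n. \<phi> (mul (s n) u) v - \<phi> (mul d u) v) \<longlonglongrightarrow> 0"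
    proof -
      have "(\<lambda>n. cmod (\<phi> (mul (s n - d) u) v)) \<longlonglongrightarrow> 0" using d P u v by blast
      then have "(\<lambda>n. norm (\<phi> (mul (s n) u) v - \<phi> (mul d u) v)) \<longlonglongrightarrow> 0"
        by (simp add: rd[OF u] pd[OF P])
      then show ?thesis by (simp only: tendsto_norm_zero_iff)
    qed
    then have "(\<lambda>n. \<phi> (mul (s n) u) v) \<longlonglongrightarrow> \<phi> (mul d u) v"
      using tendsto_add[OF _ tendsto_const[of "\<phi> (mul d u) v"]] by fastforce
    then have "\<phi> (mul d u) v = R \<phi> u v" using conv[OF P u v] by (rule LIMSEQ_unique)
    then show "\<phi> (mul d u) v = \<phi> (mul b u) (mul (invl (closure_op A0 \<delta> a)) v)
             + \<phi> (mul (closure_op A0 \<delta> b) u) (mul (invl a) v)"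
      unfolding ea eb R_def .
  qed
qed

end
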